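(* Let $n>k\ge1$, $\widetilde{\mathbf P}$ a $k\times(n-k)$ matrix over $\mathbb F_2$ with $r_{\mathbf P}=\mathrm{rank}(\widetilde{\mathbf P}^{\top})$, $\widetilde{\mathbf y}_{\mathrm P}\in\mathbb F_2^{\,n-k}$, and let $\mathcal C=\{[\mathbf x\ \ \mathbf x\widetilde{\mathbf P}]:\mathbf x\in\mathbb F_2^{\,k}\}\subseteq\mathbb F_2^{\,n}$ be the code generated by $[\mathbf I_k\ \ \widetilde{\mathbf P}]$. With $\mathbf E_{\mathbf P},\boldsymbol\Pi_{\mathbf P},\mathbf P_{\mathrm t},\boldsymbol\Pi_{\mathbf Q},\mathbf Q_{\mathrm t},\mathbf e_0$ as in the context, define for $\mathbf e^{\mathrm{pri}}\in\mathbb F_2^{\,r_{\mathbf P}}$ and $\mathbf t\in\mathbb F_2^{\,k-r_{\mathbf P}}$: $$\mathbf e=(\mathbf e^{\mathrm{pri}}\mathbf Q_{\mathrm t}^{\top}\oplus\mathbf e_0)\boldsymbol\Pi_{\mathbf Q}^{\top},\qquad \mathbf z_{\mathbf e}=(\mathbf e\oplus\widetilde{\mathbf y}_{\mathrm P})\mathbf E_{\mathbf P}^{\top},$$ $\mathbf x_{\mathbf e}$ equal to the first $k$ entries of $\mathbf z_{\mathbf e}$ if $k\le n-k$ and to $\mathbf z_{\mathbf e}$ padded with $2k-n$ trailing zeros if $k>n-k$, and $$\Phi(\mathbf e^{\mathrm{pri}},\mathbf t)=\big[(\mathbf x_{\mathbf e}\oplus\mathbf t\mathbf P_{\mathrm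 t}^{\top})\boldsymbol\Pi_{\mathbf P}^{\top}\ \ \ \widetilde{\mathbf y}_{\mathrm P}\oplus\mathbf e\big]\in\mathbb F_2^{\,n}.$$ Then $\Phi$ is a bijection from $\mathbb F_2^{\,r_{\mathbf P}}\times\mathbb F_2^{\,k-r_{\mathbf P}}$ onto $\mathcal C$. In particular the set of codeword estimates obtained from all valid TEPs and all extended choices is the whole code, of size $2^k$.
   Context: All vectors are row vectors over $\mathbb F_2$; $\oplus$ is addition over $\mathbb F_2$. $\mathbf E_{\mathbf P}$ is an invertible $(n-k)\times(n-k)$ matrix and $\boldsymbol\Pi_{\mathbf P}$ a $k\times k$ permutation matrix with $\mathbf E_{\mathbf P}\widetilde{\mathbf P}^{\top}\boldsymbol\Pi_{\mathbf P}=\begin{bmatrix}\mathbf I_{r_{\mathbf P}}&\mathbf R\\ \mathbf 0&\mathbf 0\end{bmatrix}$ with $\mathbf R$ of size $r_{\mathbf P}\times(k-r_{\mathbf P})$, and $\mathbf P_{\mathrm t}=\begin{bmatrix}\mathbf R\\ \mathbf I_{k-r_{\mathbf P}}\end{bmatrix}$. Let $r_{\mathbf Q}=n-k-r_{\mathbf P}$. If $r_{\mathbf P}<n-k$: $\mathbf Q$ is the matrix of the last $r_{\mathbf Q}$ rows of $\mathbf E_{\mathbf P}$; $\mathbf E_{\mathbf Q}$ is an invertible $r_{\mathbf Q}\times r_{\mathbf Q}$ matrix and $\boldsymbol\Pi_{\mathbf Q}$ an $(n-k)\times(n-k)$ permutation matrix with $\mathbf E_{\mathbf Q}\mathbf Q\boldsymbol\Pi_{\mathbf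 Q}=[\mathbf I_{r_{\mathbf Q}}\ \ \mathbf Q_{\mathrm r}]$; $\mathbf Q_{\mathrm t}=\begin{bmatrix}\mathbf Q_{\mathrm r}\\ \mathbf I_{r_{\mathbf P}}\end{bmatrix}$; $\mathbf e_0=[\,\widetilde{\mathbf y}_{\mathrm P}\mathbf Q^{\top}\mathbf E_{\mathbf Q}^{\top}\ \ \mathbf 0_{r_{\mathbf P}}\,]$. If $r_{\mathbf P}=n-k$: $\mathbf Q_{\mathrm t}=\boldsymbol\Pi_{\mathbf Q}=\mathbf I_{n-k}$ and $\mathbf e_0=\mathbf 0$. The vector $\mathbf e^{\mathrm{pri}}$ is called the primary TEP and $\mathbf t$ plays the role of the extended TEP. *)

theory Defs
  imports "HOL-Library.Z2" "Jordan_Normal_Form.DL_Rank" "HOL-Combinatorics.Permutations"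
begin

definition vm :: "'a :: semiring_0 vec \<Rightarrow> 'a mat \<Rightarrow> 'a vec" (infixl \<open>\<^sub>v*\<close> 70) where
  "v \<^sub>v* A = transpose_mat A *\<^sub>v v"

definition append_cols_mat :: "'a :: zero mat \<Rightarrow> 'a mat \<Rightarrow> 'a mat" where
  "append_cols_mat A B = four_block_mat A B (0\<^sub>m 0 (dim_col A)) (0\<^sub>m 0 (dim_col B))"

definition perm_matrix :: "nat \<Rightarrow> 'a :: {zero,one} mat \<Rightarrow> bool" where
  "perm_matrix m M \<longleftrightarrow> M \<in> carrier_mat m m \<and>
     (\<exists>p. p permutes {..<m} \<and> (\<forall>i<m. \<forall>j<m. M $$ (i,j) = (if p i = j then 1 else 0)))"

definition sys_code :: "nat \<Rightarrow> 'a :: semiring_0 mat \<Rightarrow> 'a vec set" where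
  "sys_code k P = {x @\<^sub>v (x \<^sub>v* P) | x. x \<in> carrier_vec k}"

end

theory Submission
  imports Defs
begin
lemma bit_add_self[simp]: "(a::bit) + a = 0" by (cases a) simp_all

lemma vm_tr[simp]: "v \<^sub>v* transpose_mat A = A *\<^sub>v v"
  unfolding vm_def by simp

lemma bit_vec_cancel:
  fixes a b c :: "bit vec"
  assumes "a \<in> carrier_vec n" "b \<in> carrier_vec n" "c \<in> carrier_vec n" "a + b = c"
  shows "a = b + c"
proof (rule eq_vecI)
  fix i assume i: "i < dim_vec (b + c)"
  have "(a + b) $ i = c $ i" by (simp only: assms(4))
  then have "a $ i + b $ i = c $ i" using assms(1-3) i by simp
  then show "a $ i = (b + c) $ i" using assms i
    by (cases "a $ i"; cases "b $ i"; cases "c $ i") simp_all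
qed (use assms in simp)

lemma vec_add_left_cancel:
  fixes a b y :: "'a::ab_group_add vec"
  assumes "a \<in> carrier_vec n" "b \<in> carrier_vec n" "y \<in> carrier_vec n" "y + a = y + b"
  shows "a = b"
proof (rule eq_vecI)
  fix i assume i: "i < dim_vec b"
  have "(y + a) $ i = (y + b) $ i" by (simp only: assms(4))
  then show "a $ i = b $ i" using assms(1-3) i by simp
qed (use assms in simp)

lemma vec_add_right_cancel:
  fixes a b y :: "'a::ab_group_add vec"
  assumes "a \<in> carrier_vec n" "b \<in> carrier_vec n" "y \<in> carrier_vec n" "a + y = b + y"
  shows "a = b"
proof (rule eq_vecI)
  fix i assume i: "i < dim_vec b"
  have "(a + y) $ i = (b + y) $ i" by (simp only: assms(4))
  then show "a $ i = b $ i" using assms(1-3) i by simp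
qed (use assms in simp)

lemma append_vec_zero_dim: "w \<in> carrier_vec 0 \<Longrightarrow> v @\<^sub>v w = v"
  by (intro eq_vecI) auto

lemma vec_first_append: "a \<in> carrier_vec r \<Longrightarrow> vec_first (a @\<^sub>v b) r = a"
  unfolding vec_first_def by (intro eq_vecI) auto

lemma vec_last_full: "w \<in> carrier_vec m \<Longrightarrow> vec_last w m = w"
  unfolding vec_last_def by (intro eq_vecI) auto

lemma perm_matrix_orth:
  fixes M :: "'a::field mat"
  assumes "perm_matrix m M"
  shows "M \<in> carrier_mat m m" "M * transpose_mat M = 1\<^sub>m m" "transpose_mat M * M = 1\<^sub>m m"
proof -
  from assms obtain p where M: "M \<in> carrier_mat m m" and p: "p permutes {..<m}"
    and ent: "\<And>i j. i < m \<Longrightarrow> j < m \<Longrightarrow> M $$ (i,j) = (if p i = j then 1 else 0)"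
    unfolding perm_matrix_def by blast
  show "M \<in> carrier_mat m m" by fact
  have pm: "\<And>i. i < m \<Longrightarrow> p i < m" using p by (metis lessThan_iff permutes_in_image)
  have pinj: "\<And>i j. p i = p j \<Longrightarrow> i = j" using p by (metis permutes_inj injD)
  show 1: "M * transpose_mat M = 1\<^sub>m m"
  proof (rule eq_matI)
    fix i j assume i: "i < dim_row (1\<^sub>m m :: 'a mat)" and j: "j < dim_col (1\<^sub>m m :: 'a mat)"
    then have i: "i < m" and j: "j < m" by auto
    have "(M * transpose_mat M) $$ (i,j) = (\<Sum>l\<in>{0..<m}. M $$ (i,l) * M $$ (j,l))"
      using M i j by (simp add: scalar_prod_def)
    also have "\<dots> = (\<Sum>l\<in>{0..<m}. if l = p i then (if p j = l then 1 else 0) else 0)"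
      by (rule sum.cong) (auto simp: ent i j)
    also have "\<dots> = (if i = j then 1 else 0)" using pm[OF i] pinj by auto
    finally show "(M * transpose_mat M) $$ (i,j) = 1\<^sub>m m $$ (i,j)" using i j by simp
  qed (use M in auto)
  show "transpose_mat M * M = 1\<^sub>m m"
    by (rule mat_mult_left_right_inverse[OF M _ 1]) (use M in auto)
qed

lemma invertible_inv:
  fixes A :: "'a::field mat"
  assumes "A \<in> carrier_mat m m" "invertible_mat A"
  obtains B where "B \<in> carrier_mat m m" "A * B = 1\<^sub>m m" "B * A = 1\<^sub>m m"
proof -
  from assms obtain B where AB: "A * B = 1\<^sub>m (dim_row A)" and BA: "B * A = 1\<^sub>m (dim_row B)"
    unfolding invertible_mat_def inverts_mat_def by blast
  have "dim_col B = m" using arg_cong[OF AB, of dim_col] assms by simp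
  moreover have "dim_row B = m" using arg_cong[OF BA, of dim_col] assms by simp
  ultimately show ?thesis using that AB BA assms by auto
qed

lemma card_bit_vec: "card (carrier_vec n :: bit vec set) = 2 ^ n"
proof -
  have "bij_betw (\<lambda>v. restrict (($) v) {..<n}) (carrier_vec n) (PiE {..<n} (\<lambda>_. UNIV :: bit set))"
  proof (rule bij_betwI')
    fix v w :: "bit vec" assume "v \<in> carrier_vec n" "w \<in> carrier_vec n"
    then show "(restrict (($) v) {..<n} = restrict (($) w) {..<n}) = (v = w)"
      by (metis carrier_vecD eq_vecI lessThan_iff restrict_apply')
  next
    fix v :: "bit vec" assume "v \<in> carrier_vec n"
    then show "restrict (($) v) {..<n} \<in> PiE {..<n} (\<lambda>_. UNIV)" by auto
  next
    fix f assume f: "f \<in> PiE {..<n} (\<lambda>_. UNIV :: bit set)"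
    show "\<exists>v\<in>carrier_vec n. f = restrict (($) v) {..<n}"
      by (rule bexI[of _ "vec n f"]) (use f in \<open>auto simp: PiE_def extensional_def\<close>)
  qed
  then have "card (carrier_vec n :: bit vec set) = card (PiE {..<n} (\<lambda>_. UNIV :: bit set))"
    by (rule bij_betw_same_card)
  also have "\<dots> = 2 ^ n"
  proof -
    have "card (UNIV :: bit set) = 2"
    proof -
      have u: "UNIV = {0::bit, 1}" using bit.exhaust by auto
      have "card {0::bit, 1} = 2" by simp
      then show ?thesis by (simp only: u)
    qed
    then show ?thesis by (simp add: card_PiE)
  qed
  finally show ?thesis .
qed

lemma bv_L1: assumes "p \<in> carrier_vec n" "q \<in> carrier_vec n" shows "(p + q) + p = (q :: bit vec)"
proof (rule eq_vecI)
  fix i assume "i < dim_vec q" with assms show "((p + q) + p) $ i = q $ i"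
    by (cases "p$i"; cases "q$i") auto
qed (use assms in auto)
lemma bv_L2: assumes "p \<in> carrier_vec n" "q \<in> carrier_vec n" shows "p + (p + q) = (q :: bit vec)"
proof (rule eq_vecI)
  fix i assume "i < dim_vec q" with assms show "(p + (p + q)) $ i = q $ i"
    by (cases "p$i"; cases "q$i") auto
qed (use assms in auto)
lemma bv_L3: assumes "p \<in> carrier_vec n" "q \<in> carrier_vec n" shows "(q + p) + p = (q :: bit vec)"
proof (rule eq_vecI)
  fix i assume "i < dim_vec q" with assms show "((q + p) + p) $ i = q $ i"
    by (cases "p$i"; cases "q$i") auto
qed (use assms in auto)
lemma bv_self: "p \<in> carrier_vec n \<Longrightarrow> p + p = (0\<^sub>v n :: bit vec)"
  by (intro eq_vecI) auto

theorem mainTheorem5: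
  fixes n k r :: nat
    and Ptil :: "bit mat" and y :: "bit vec"
    and EP PiP R EQ PiQ Qr :: "bit mat"
  assumes nk: "n > k" "k \<ge> 1"
    and Ptil: "Ptil \<in> carrier_mat k (n - k)"
    and y: "y \<in> carrier_vec (n - k)"
    and rank: "r = vec_space.rank (n - k) (transpose_mat Ptil)"
    and EP: "EP \<in> carrier_mat (n - k) (n - k)" "invertible_mat EP"
    and PiP: "perm_matrix k PiP"
    and R: "R \<in> carrier_mat r (k - r)"
    and EPblock: "EP * transpose_mat Ptil * PiP =
        four_block_mat (1\<^sub>m r) R (0\<^sub>m (n - k - r) r) (0\<^sub>m (n - k - r) (k - r))"
  defines "rQ \<equiv> n - k - r"
    defines "Q \<equiv> mat (n - k - r) (n - k) (\<lambda>(i, j). EP $$ (r + i, j))"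
    defines "Pt \<equiv> R @\<^sub>r 1\<^sub>m (k - r)"
  assumes Qcase: "r < n - k \<Longrightarrow>
        EQ \<in> carrier_mat rQ rQ \<and> invertible_mat EQ \<and> perm_matrix (n - k) PiQ \<and>
        Qr \<in> carrier_mat rQ r \<and> EQ * Q * PiQ = append_cols_mat (1\<^sub>m rQ) Qr"
    and Qfull: "r = n - k \<Longrightarrow> PiQ = 1\<^sub>m (n - k)"
  defines "Qt \<equiv> (if r < n - k then Qr @\<^sub>r 1\<^sub>m r else 1\<^sub>m (n - k))"
    defines "e0 \<equiv> (if r < n - k then ((y \<^sub>v* transpose_mat Q) \<^sub>v* transpose_mat EQ) @\<^sub>v 0\<^sub>v r
              else 0\<^sub>v (n - k))"
    defines "e \<equiv> (\<lambda>epri. ((epri \<^sub>v* transpose_mat Qt) + e0) \<^sub>v* transpose_mat PiQ)"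
    defines "z \<equiv> (\<lambda>epri. (e epri + y) \<^sub>v* transpose_mat EP)"
    defines "xe \<equiv> (\<lambda>epri. if k \<le> n - k then vec_first (z epri) k
                        else z epri @\<^sub>v 0\<^sub>v (2 * k - n))"
    defines "Phi \<equiv> (\<lambda>(epri, t). ((xe epri + (t \<^sub>v* transpose_mat Pt)) \<^sub>v* transpose_mat PiP)
                             @\<^sub>v (y + e epri))"
  shows "bij_betw Phi (carrier_vec r \<times> carrier_vec (k - r)) (sys_code k Ptil)
         \<and> card (sys_code k Ptil) = 2 ^ k"
proof -
  obtain m where m: "m = n - k" by blast
  have nmk: "n = m + k" using m nk by simp
  have Ptilc[simp]: "Ptil \<in> carrier_mat k m" using Ptil m by simp
  have Pc[simp]: "transpose_mat Ptil \<in> carrier_mat m k" using Ptil m by auto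
  have EPc[simp]: "EP \<in> carrier_mat m m" using EP m by simp
  have yc[simp]: "y \<in> carrier_vec m" using y m by simp
  have PiPc[simp]: "PiP \<in> carrier_mat k k" and PiP1: "PiP * transpose_mat PiP = 1\<^sub>m k"
    and PiP2: "transpose_mat PiP * PiP = 1\<^sub>m k" using perm_matrix_orth[OF PiP] by auto
  have Rc[simp]: "R \<in> carrier_mat r (k - r)" by fact
  have dimr: "r + (m - r) = m"
  proof -
    have "dim_row (EP * transpose_mat Ptil * PiP) = m" using carrier_matD[OF EPc] by simp
    then show ?thesis unfolding EPblock by simp
  qed
  have dimc: "r + (k - r) = k"
  proof -
    have "dim_col (EP * transpose_mat Ptil * PiP) = k" using carrier_matD[OF PiPc] by simp
    then show ?thesis unfolding EPblock by simp
  qed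
  have rm: "r \<le> m" using dimr by linarith
  have rk: "r \<le> k" using dimc by linarith
  obtain EPi where EPic[simp]: "EPi \<in> carrier_mat m m" and EP1: "EP * EPi = 1\<^sub>m m" and EP2: "EPi * EP = 1\<^sub>m m"
    using invertible_inv[OF EPc EP(2)] by blast
  have PiQ: "PiQ \<in> carrier_mat m m \<and> PiQ * transpose_mat PiQ = 1\<^sub>m m \<and> transpose_mat PiQ * PiQ = 1\<^sub>m m"
  proof (cases "r < m")
    case True
    then have "perm_matrix m PiQ" using Qcase m by simp
    then show ?thesis using perm_matrix_orth by blast
  next
    case False
    then have "PiQ = 1\<^sub>m m" using Qfull rm m by simp
    then show ?thesis by simp
  qed
  have PiQc[simp]: "PiQ \<in> carrier_mat m m" using PiQ by blast
  have Qc[simp]: "Q \<in> carrier_mat (m - r) m" unfolding Q_def m by simp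
  have rowQ: "\<And>i. i < m - r \<Longrightarrow> row Q i = row EP (r + i)"
    by (rule eq_vecI) (use carrier_matD[OF EPc] in \<open>auto simp: Q_def m\<close>)
  have Qrow: "\<And>v i. v \<in> carrier_vec m \<Longrightarrow> i < m - r \<Longrightarrow> (Q *\<^sub>v v) $ i = (EP *\<^sub>v v) $ (r + i)"
  proof -
    fix v :: "bit vec" and i assume v: "v \<in> carrier_vec m" and i: "i < m - r"
    have "(Q *\<^sub>v v) $ i = row Q i \<bullet> v" using carrier_matD[OF Qc] i by simp
    also have "\<dots> = row EP (r + i) \<bullet> v" using rowQ[OF i] by simp
    also have "\<dots> = (EP *\<^sub>v v) $ (r + i)" using carrier_matD[OF EPc] i by simp
    finally show "(Q *\<^sub>v v) $ i = (EP *\<^sub>v v) $ (r + i)" .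
  qed
  have QM: "\<And>M c i j. M \<in> carrier_mat m c \<Longrightarrow> i < m - r \<Longrightarrow> j < c \<Longrightarrow> (Q * M) $$ (i, j) = (EP * M) $$ (r + i, j)"
  proof -
    fix M :: "bit mat" and c i j assume M: "M \<in> carrier_mat m c" and i: "i < m - r" and j: "j < c"
    have "(Q * M) $$ (i, j) = row Q i \<bullet> col M j" using carrier_matD[OF Qc] carrier_matD[OF M] i j by simp
    also have "\<dots> = row EP (r + i) \<bullet> col M j" using rowQ[OF i] by simp
    also have "\<dots> = (EP * M) $$ (r + i, j)" using carrier_matD[OF EPc] carrier_matD[OF M] i j by simp
    finally show "(Q * M) $$ (i, j) = (EP * M) $$ (r + i, j)" .
  qed
  define B where "B = four_block_mat (1\<^sub>m r) R (0\<^sub>m (m - r) r) (0\<^sub>m (m - r) (k - r))"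
  have Bc[simp]: "B \<in> carrier_mat m k" unfolding B_def using dimr dimc
    by (metis four_block_carrier_mat one_carrier_mat zero_carrier_mat)
  have EPB: "EP * transpose_mat Ptil * PiP = B" unfolding B_def EPblock m by simp
  have PPc[simp]: "transpose_mat Ptil * PiP \<in> carrier_mat m k" using Pc PiPc by (rule mult_carrier_mat)
  have F1: "transpose_mat Ptil * PiP = EPi * B"
  proof -
    have "EPi * B = EPi * (EP * (transpose_mat Ptil * PiP))"
      unfolding EPB[symmetric] by (subst assoc_mult_mat[of _ m m _ k _ k]) auto
    also have "\<dots> = (EPi * EP) * (transpose_mat Ptil * PiP)"
      by (subst assoc_mult_mat[of _ m m _ m _ k]) auto
    also have "\<dots> = transpose_mat Ptil * PiP" unfolding EP2 by (rule left_mult_one_mat[OF PPc])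
    finally show ?thesis by simp
  qed
  have Bv: "\<And>a1 a2. a1 \<in> carrier_vec r \<Longrightarrow> a2 \<in> carrier_vec (k - r) \<Longrightarrow>
      B *\<^sub>v (a1 @\<^sub>v a2) = (a1 + R *\<^sub>v a2) @\<^sub>v 0\<^sub>v (m - r)"
    unfolding B_def by (subst four_block_mat_mult_vec[of _ r r _ "k - r" _ "m - r"]) auto
  have Ptc[simp]: "Pt \<in> carrier_mat k (k - r)" unfolding Pt_def using dimc
    by (metis carrier_append_rows Rc one_carrier_mat)
  have Ptv: "\<And>t. t \<in> carrier_vec (k - r) \<Longrightarrow> Pt *\<^sub>v t = (R *\<^sub>v t) @\<^sub>v t"
    unfolding Pt_def by (subst mat_mult_append[of _ r "k - r" _ "k - r"]) auto
  have Qtc[simp]: "Qt \<in> carrier_mat m r"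
  proof (cases "r < m")
    case True
    then have "Qr \<in> carrier_mat (m - r) r" using Qcase m rQ_def by simp
    then have "Qr @\<^sub>r 1\<^sub>m r \<in> carrier_mat ((m - r) + r) r" by auto
    moreover have "Qt = Qr @\<^sub>r 1\<^sub>m r" using True m Qt_def by simp
    ultimately show ?thesis using dimr by (simp add: add.commute)
  next
    case False
    then show ?thesis unfolding Qt_def using rm m by simp
  qed
  have e0c[simp]: "e0 \<in> carrier_vec m"
  proof (cases "r < m")
    case True
    then have "EQ \<in> carrier_mat (m - r) (m - r)" using Qcase m rQ_def by simp
    then have "EQ *\<^sub>v (Q *\<^sub>v y) \<in> carrier_vec (m - r)" using Qc yc by (metis mult_mat_vec_carrier)
    then have "(EQ *\<^sub>v (Q *\<^sub>v y)) @\<^sub>v 0\<^sub>v r \<in> carrier_vec ((m - r) + r)"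
      by (intro append_carrier_vec) auto
    moreover have "e0 = (EQ *\<^sub>v (Q *\<^sub>v y)) @\<^sub>v 0\<^sub>v r" using True m e0_def by simp
    ultimately show ?thesis using dimr by (simp add: add.commute)
  next
    case False
    then show ?thesis unfolding e0_def using m by simp
  qed
  have e_eq: "\<And>epri. e epri = PiQ *\<^sub>v (Qt *\<^sub>v epri + e0)" unfolding e_def by simp
  have ec[simp]: "\<And>epri. e epri \<in> carrier_vec m" unfolding e_eq by (intro carrier_vecI) (simp only: dim_mult_mat_vec carrier_matD[OF PiQc])
  have z_eq: "\<And>epri. z epri = EP *\<^sub>v (e epri + y)" unfolding z_def by simp
  have zc[simp]: "\<And>epri. z epri \<in> carrier_vec m" unfolding z_eq by (intro carrier_vecI) (simp only: dim_mult_mat_vec carrier_matD[OF EPc])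
  have Phi_eq: "\<And>epri t. Phi (epri, t) = (PiP *\<^sub>v (xe epri + Pt *\<^sub>v t)) @\<^sub>v (y + e epri)"
    by (simp only: Phi_def prod.case vm_tr)
  have xe_form: "\<And>epri. (\<forall>i. r \<le> i \<longrightarrow> i < m \<longrightarrow> z epri $ i = 0) \<Longrightarrow>
       xe epri = vec_first (z epri) r @\<^sub>v 0\<^sub>v (k - r)"
  proof -
    fix epri assume H: "\<forall>i. r \<le> i \<longrightarrow> i < m \<longrightarrow> z epri $ i = 0"
    have zd: "dim_vec (z epri) = m" using zc by (simp add: carrier_vecD)
    show "xe epri = vec_first (z epri) r @\<^sub>v 0\<^sub>v (k - r)"
    proof (cases "k \<le> m")
      case True
      then have "xe epri = vec_first (z epri) k" using xe_def m by simp
      also have "\<dots> = vec_first (z epri) r @\<^sub>v 0\<^sub>v (k - r)"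
        by (rule eq_vecI) (use H True rk zd in \<open>auto simp: vec_first_def\<close>)
      finally show ?thesis .
    next
      case False
      then have "xe epri = z epri @\<^sub>v 0\<^sub>v (2 * k - n)" using xe_def m by simp
      also have "\<dots> = vec_first (z epri) r @\<^sub>v 0\<^sub>v (k - r)"
        by (rule eq_vecI) (use H False rk rm nmk in \<open>auto simp: vec_first_def zd\<close>)
      finally show ?thesis .
    qed
  qed
  have QC: "r < m \<Longrightarrow> EQ \<in> carrier_mat (m - r) (m - r) \<and> invertible_mat EQ \<and> Qr \<in> carrier_mat (m - r) r \<and>
      EQ * Q * PiQ = append_cols_mat (1\<^sub>m (m - r)) Qr" using Qcase m rQ_def by simp
  have Qt_lt: "r < m \<Longrightarrow> Qt = Qr @\<^sub>r 1\<^sub>m r" using Qt_def m by simp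
  have e0_lt: "r < m \<Longrightarrow> e0 = (EQ *\<^sub>v (Q *\<^sub>v y)) @\<^sub>v 0\<^sub>v r" using e0_def m by simp
  have Qt_ge: "\<not> r < m \<Longrightarrow> Qt = 1\<^sub>m m" using Qt_def m by simp
  have e0_ge: "\<not> r < m \<Longrightarrow> e0 = 0\<^sub>v m" using e0_def m by simp
  have PiQ_ge: "\<not> r < m \<Longrightarrow> PiQ = 1\<^sub>m m" using Qfull rm m by simp
  have wc: "\<And>w1 w2. w1 \<in> carrier_vec (m - r) \<Longrightarrow> w2 \<in> carrier_vec r \<Longrightarrow> w1 @\<^sub>v w2 \<in> carrier_vec m"
    using dimr by (metis append_carrier_vec add.commute)
  have QPi: "\<And>w1 w2. r < m \<Longrightarrow> w1 \<in> carrier_vec (m - r) \<Longrightarrow> w2 \<in> carrier_vec r \<Longrightarrow>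
      EQ *\<^sub>v (Q *\<^sub>v (PiQ *\<^sub>v (w1 @\<^sub>v w2))) = w1 + Qr *\<^sub>v w2"
  proof -
    fix w1 w2 :: "bit vec" assume lt: "r < m" and w1: "w1 \<in> carrier_vec (m - r)" and w2: "w2 \<in> carrier_vec r"
    have EQc: "EQ \<in> carrier_mat (m - r) (m - r)" and Qrc: "Qr \<in> carrier_mat (m - r) r"
      and A: "EQ * Q * PiQ = append_cols_mat (1\<^sub>m (m - r)) Qr" using QC[OF lt] by auto
    have "(EQ * Q * PiQ) *\<^sub>v (w1 @\<^sub>v w2) = (EQ * Q) *\<^sub>v (PiQ *\<^sub>v (w1 @\<^sub>v w2))"
      by (rule assoc_mult_mat_vec[OF mult_carrier_mat[OF EQc Qc] PiQc wc[OF w1 w2]])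
    also have "\<dots> = EQ *\<^sub>v (Q *\<^sub>v (PiQ *\<^sub>v (w1 @\<^sub>v w2)))"
      by (rule assoc_mult_mat_vec[OF EQc Qc mult_mat_vec_carrier[OF PiQc wc[OF w1 w2]]])
    finally have "EQ *\<^sub>v (Q *\<^sub>v (PiQ *\<^sub>v (w1 @\<^sub>v w2))) = (EQ * Q * PiQ) *\<^sub>v (w1 @\<^sub>v w2)" by simp
    also have "\<dots> = (1\<^sub>m (m - r) *\<^sub>v w1 + Qr *\<^sub>v w2) @\<^sub>v (0\<^sub>m 0 (m - r) *\<^sub>v w1 + 0\<^sub>m 0 r *\<^sub>v w2)"
      unfolding A append_cols_mat_def using Qrc w1 w2
      by (subst four_block_mat_mult_vec[of _ "m - r" "m - r" _ r _ 0]) (auto simp: carrier_matD)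
    also have "\<dots> = (w1 + Qr *\<^sub>v w2) @\<^sub>v (0\<^sub>m 0 (m - r) *\<^sub>v w1 + 0\<^sub>m 0 r *\<^sub>v w2)"
      by (subst one_mult_mat_vec[OF w1]) (rule refl)
    also have "\<dots> = w1 + Qr *\<^sub>v w2"
      by (rule append_vec_zero_dim, rule carrier_vecI) simp
    finally show "EQ *\<^sub>v (Q *\<^sub>v (PiQ *\<^sub>v (w1 @\<^sub>v w2))) = w1 + Qr *\<^sub>v w2" .
  qed
  have Qyc[simp]: "Q *\<^sub>v y \<in> carrier_vec (m - r)" by (rule mult_mat_vec_carrier[OF Qc yc])
  have Qe: "\<And>epri. epri \<in> carrier_vec r \<Longrightarrow> Q *\<^sub>v e epri = Q *\<^sub>v y"
  proof -
    fix epri :: "bit vec" assume ep: "epri \<in> carrier_vec r"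
    show "Q *\<^sub>v e epri = Q *\<^sub>v y"
    proof (cases "r < m")
      case True
      have EQc: "EQ \<in> carrier_mat (m - r) (m - r)" and EQinv: "invertible_mat EQ"
        and Qrc: "Qr \<in> carrier_mat (m - r) r" using QC[OF True] by auto
      obtain EQi where EQic: "EQi \<in> carrier_mat (m - r) (m - r)" and EQ2: "EQi * EQ = 1\<^sub>m (m - r)"
        using invertible_inv[OF EQc EQinv] by blast
      have EQQy: "EQ *\<^sub>v (Q *\<^sub>v y) \<in> carrier_vec (m - r)" by (rule mult_mat_vec_carrier[OF EQc Qyc])
      have Qrep: "Qr *\<^sub>v epri \<in> carrier_vec (m - r)" by (rule mult_mat_vec_carrier[OF Qrc ep])
      define w1 where "w1 = Qr *\<^sub>v epri + EQ *\<^sub>v (Q *\<^sub>v y)"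
      have w1c: "w1 \<in> carrier_vec (m - r)" unfolding w1_def by (rule add_carrier_vec[OF Qrep EQQy])
      have a: "Qt *\<^sub>v epri = (Qr *\<^sub>v epri) @\<^sub>v epri"
      proof -
        have "Qt *\<^sub>v epri = (Qr *\<^sub>v epri) @\<^sub>v (1\<^sub>m r *\<^sub>v epri)"
          unfolding Qt_lt[OF True] by (rule mat_mult_append[OF Qrc one_carrier_mat ep])
        also have "\<dots> = (Qr *\<^sub>v epri) @\<^sub>v epri" by (subst one_mult_mat_vec[OF ep]) (rule refl)
        finally show ?thesis .
      qed
      have w: "Qt *\<^sub>v epri + e0 = w1 @\<^sub>v epri"
      proof -
        have "Qt *\<^sub>v epri + e0 = ((Qr *\<^sub>v epri) @\<^sub>v epri) + ((EQ *\<^sub>v (Q *\<^sub>v y)) @\<^sub>v 0\<^sub>v r)"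
          unfolding a e0_lt[OF True] by (rule refl)
        also have "\<dots> = (Qr *\<^sub>v epri + EQ *\<^sub>v (Q *\<^sub>v y)) @\<^sub>v (epri + 0\<^sub>v r)"
          by (rule append_vec_add[OF Qrep EQQy ep zero_carrier_vec])
        also have "epri + 0\<^sub>v r = epri" by (rule right_zero_vec[OF ep])
        finally show ?thesis unfolding w1_def .
      qed
      have "EQ *\<^sub>v (Q *\<^sub>v e epri) = w1 + Qr *\<^sub>v epri" unfolding e_eq w by (rule QPi[OF True w1c ep])
      also have "\<dots> = EQ *\<^sub>v (Q *\<^sub>v y)" unfolding w1_def by (rule bv_L1[OF Qrep EQQy])
      finally have h: "EQ *\<^sub>v (Q *\<^sub>v e epri) = EQ *\<^sub>v (Q *\<^sub>v y)" .
      have canc: "\<And>x. x \<in> carrier_vec (m - r) \<Longrightarrow> EQi *\<^sub>v (EQ *\<^sub>v x) = x"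
      proof -
        fix x :: "bit vec" assume x: "x \<in> carrier_vec (m - r)"
        have "EQi *\<^sub>v (EQ *\<^sub>v x) = (EQi * EQ) *\<^sub>v x" by (rule assoc_mult_mat_vec[symmetric, OF EQic EQc x])
        also have "\<dots> = x" unfolding EQ2 by (rule one_mult_mat_vec[OF x])
        finally show "EQi *\<^sub>v (EQ *\<^sub>v x) = x" .
      qed
      have Qec: "Q *\<^sub>v e epri \<in> carrier_vec (m - r)" by (rule mult_mat_vec_carrier[OF Qc ec])
      show ?thesis using canc[OF Qec] canc[OF Qyc] h by metis
    next
      case False
      then have mr: "m - r = 0" using rm by simp
      show ?thesis by (rule eq_vecI) (simp_all add: carrier_matD[OF Qc] mr)
    qed
  qed
  have zzero: "\<And>epri i. epri \<in> carrier_vec r \<Longrightarrow> r \<le> i \<Longrightarrow> i < m \<Longrightarrow> z epri $ i = 0"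
  proof -
    fix epri :: "bit vec" and i assume ep: "epri \<in> carrier_vec r" and i1: "r \<le> i" and i2: "i < m"
    have sc: "e epri + y \<in> carrier_vec m" by (rule add_carrier_vec[OF ec yc])
    have ir: "i - r < m - r" "r + (i - r) = i" using i1 i2 by auto
    have "z epri $ i = (Q *\<^sub>v (e epri + y)) $ (i - r)" unfolding z_eq using Qrow[OF sc ir(1)] ir(2) by simp
    also have "Q *\<^sub>v (e epri + y) = Q *\<^sub>v y + Q *\<^sub>v y"
      using mult_add_distrib_mat_vec[OF Qc ec yc] Qe[OF ep] by simp
    also have "\<dots> = 0\<^sub>v (m - r)" by (rule bv_self[OF Qyc])
    finally show "z epri $ i = 0" using ir by simp
  qed
  have zd: "\<And>epri. dim_vec (z epri) = m" using zc by (simp add: carrier_vecD)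
  have zsplit: "\<And>epri. epri \<in> carrier_vec r \<Longrightarrow> vec_first (z epri) r @\<^sub>v 0\<^sub>v (m - r) = z epri"
  proof -
    fix epri :: "bit vec" assume ep: "epri \<in> carrier_vec r"
    show "vec_first (z epri) r @\<^sub>v 0\<^sub>v (m - r) = z epri"
    proof (rule eq_vecI)
      fix i assume "i < dim_vec (z epri)"
      then have i: "i < m" using zd by simp
      show "(vec_first (z epri) r @\<^sub>v 0\<^sub>v (m - r)) $ i = z epri $ i"
        using i rm zzero[OF ep, of i] by (auto simp: vec_first_def)
    qed (simp add: zd dimr)
  qed
  have fwd: "\<And>epri t. epri \<in> carrier_vec r \<Longrightarrow> t \<in> carrier_vec (k - r) \<Longrightarrow>
    xe epri + Pt *\<^sub>v t = (vec_first (z epri) r + R *\<^sub>v t) @\<^sub>v t \<and>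
    transpose_mat Ptil *\<^sub>v (PiP *\<^sub>v (xe epri + Pt *\<^sub>v t)) = y + e epri"
  proof -
    fix epri t :: "bit vec" assume ep: "epri \<in> carrier_vec r" and tc: "t \<in> carrier_vec (k - r)"
    let ?zf = "vec_first (z epri) r"
    have zfc: "?zf \<in> carrier_vec r" by simp
    have Rtc: "R *\<^sub>v t \<in> carrier_vec r" by (rule mult_mat_vec_carrier[OF Rc tc])
    have xeq: "xe epri = ?zf @\<^sub>v 0\<^sub>v (k - r)" using xe_form zzero[OF ep] by blast
    have A: "xe epri + Pt *\<^sub>v t = (?zf + R *\<^sub>v t) @\<^sub>v t"
    proof -
      have "xe epri + Pt *\<^sub>v t = (?zf @\<^sub>v 0\<^sub>v (k - r)) + ((R *\<^sub>v t) @\<^sub>v t)" unfolding xeq Ptv[OF tc] by (rule refl)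
      also have "\<dots> = (?zf + R *\<^sub>v t) @\<^sub>v (0\<^sub>v (k - r) + t)"
        by (rule append_vec_add[OF zfc Rtc zero_carrier_vec tc])
      also have "0\<^sub>v (k - r) + t = t" by (rule left_zero_vec[OF tc])
      finally show ?thesis .
    qed
    define a where "a = (?zf + R *\<^sub>v t) @\<^sub>v t"
    have a1c: "?zf + R *\<^sub>v t \<in> carrier_vec r" by (rule add_carrier_vec[OF zfc Rtc])
    have ac: "a \<in> carrier_vec k" unfolding a_def using append_carrier_vec[OF a1c tc] dimc by simp
    have Ba: "B *\<^sub>v a = z epri"
    proof -
      have "B *\<^sub>v a = ((?zf + R *\<^sub>v t) + R *\<^sub>v t) @\<^sub>v 0\<^sub>v (m - r)" unfolding a_def by (rule Bv[OF a1c tc])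
      also have "(?zf + R *\<^sub>v t) + R *\<^sub>v t = ?zf" by (rule bv_L3[OF Rtc zfc])
      also have "?zf @\<^sub>v 0\<^sub>v (m - r) = z epri" by (rule zsplit[OF ep])
      finally show ?thesis .
    qed
    have sc: "e epri + y \<in> carrier_vec m" by (rule add_carrier_vec[OF ec yc])
    have "transpose_mat Ptil *\<^sub>v (PiP *\<^sub>v a) = (transpose_mat Ptil * PiP) *\<^sub>v a"
      by (rule assoc_mult_mat_vec[symmetric, OF Pc PiPc ac])
    also have "\<dots> = EPi *\<^sub>v (B *\<^sub>v a)" unfolding F1 by (rule assoc_mult_mat_vec[OF EPic Bc ac])
    also have "\<dots> = EPi *\<^sub>v (EP *\<^sub>v (e epri + y))" unfolding Ba z_eq by (rule refl)
    also have "\<dots> = (EPi * EP) *\<^sub>v (e epri + y)" by (rule assoc_mult_mat_vec[symmetric, OF EPic EPc sc])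
    also have "\<dots> = e epri + y" unfolding EP2 by (rule one_mult_mat_vec[OF sc])
    also have "\<dots> = y + e epri" by (rule comm_add_vec[OF ec yc])
    finally show "xe epri + Pt *\<^sub>v t = (?zf + R *\<^sub>v t) @\<^sub>v t \<and>
      transpose_mat Ptil *\<^sub>v (PiP *\<^sub>v (xe epri + Pt *\<^sub>v t)) = y + e epri" using A a_def by simp
  qed
  have Qta: "\<And>epri. r < m \<Longrightarrow> epri \<in> carrier_vec r \<Longrightarrow> Qt *\<^sub>v epri = (Qr *\<^sub>v epri) @\<^sub>v epri"
  proof -
    fix epri :: "bit vec" assume True: "r < m" and ep: "epri \<in> carrier_vec r"
    have Qrc: "Qr \<in> carrier_mat (m - r) r" using QC[OF True] by auto
    have "Qt *\<^sub>v epri = (Qr *\<^sub>v epri) @\<^sub>v (1\<^sub>m r *\<^sub>v epri)"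
      unfolding Qt_lt[OF True] by (rule mat_mult_append[OF Qrc one_carrier_mat ep])
    also have "\<dots> = (Qr *\<^sub>v epri) @\<^sub>v epri" by (subst one_mult_mat_vec[OF ep]) (rule refl)
    finally show "Qt *\<^sub>v epri = (Qr *\<^sub>v epri) @\<^sub>v epri" .
  qed
  have PiPcanc: "\<And>x. x \<in> carrier_vec k \<Longrightarrow> transpose_mat PiP *\<^sub>v (PiP *\<^sub>v x) = x"
  proof -
    fix x :: "bit vec" assume x: "x \<in> carrier_vec k"
    have "transpose_mat PiP *\<^sub>v (PiP *\<^sub>v x) = (transpose_mat PiP * PiP) *\<^sub>v x"
      by (rule assoc_mult_mat_vec[symmetric, OF transpose_carrier_mat[THEN iffD2, OF PiPc] PiPc x])
    then show "transpose_mat PiP *\<^sub>v (PiP *\<^sub>v x) = x" unfolding PiP2 using one_mult_mat_vec[OF x] by simp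
  qed
  have PiPcanc2: "\<And>x. x \<in> carrier_vec k \<Longrightarrow> PiP *\<^sub>v (transpose_mat PiP *\<^sub>v x) = x"
  proof -
    fix x :: "bit vec" assume x: "x \<in> carrier_vec k"
    have "PiP *\<^sub>v (transpose_mat PiP *\<^sub>v x) = (PiP * transpose_mat PiP) *\<^sub>v x"
      by (rule assoc_mult_mat_vec[symmetric, OF PiPc transpose_carrier_mat[THEN iffD2, OF PiPc] x])
    then show "PiP *\<^sub>v (transpose_mat PiP *\<^sub>v x) = x" unfolding PiP1 using one_mult_mat_vec[OF x] by simp
  qed
  have PiQcanc: "\<And>x. x \<in> carrier_vec m \<Longrightarrow> transpose_mat PiQ *\<^sub>v (PiQ *\<^sub>v x) = x"
  proof -
    fix x :: "bit vec" assume x: "x \<in> carrier_vec m"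
    have "transpose_mat PiQ *\<^sub>v (PiQ *\<^sub>v x) = (transpose_mat PiQ * PiQ) *\<^sub>v x"
      by (rule assoc_mult_mat_vec[symmetric, OF transpose_carrier_mat[THEN iffD2, OF PiQc] PiQc x])
    then show "transpose_mat PiQ *\<^sub>v (PiQ *\<^sub>v x) = x" using PiQ one_mult_mat_vec[OF x] by simp
  qed
  have PiQcanc2: "\<And>x. x \<in> carrier_vec m \<Longrightarrow> PiQ *\<^sub>v (transpose_mat PiQ *\<^sub>v x) = x"
  proof -
    fix x :: "bit vec" assume x: "x \<in> carrier_vec m"
    have "PiQ *\<^sub>v (transpose_mat PiQ *\<^sub>v x) = (PiQ * transpose_mat PiQ) *\<^sub>v x"
      by (rule assoc_mult_mat_vec[symmetric, OF PiQc transpose_carrier_mat[THEN iffD2, OF PiQc] x])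
    then show "PiQ *\<^sub>v (transpose_mat PiQ *\<^sub>v x) = x" using PiQ one_mult_mat_vec[OF x] by simp
  qed
  have xac: "\<And>epri t. t \<in> carrier_vec (k - r) \<Longrightarrow> xe epri + Pt *\<^sub>v t \<in> carrier_vec k"
    by (intro carrier_vecI) (simp add: carrier_matD[OF Ptc])
  have inj: "inj_on Phi (carrier_vec r \<times> carrier_vec (k - r))"
  proof (rule inj_onI)
    fix p1 p2 assume p1: "p1 \<in> carrier_vec r \<times> carrier_vec (k - r)" and p2: "p2 \<in> carrier_vec r \<times> carrier_vec (k - r)"
      and eq: "Phi p1 = Phi p2"
    obtain e1 t1 where p1e: "p1 = (e1, t1)" by (cases p1)
    obtain e2 t2 where p2e: "p2 = (e2, t2)" by (cases p2)
    have e1c: "e1 \<in> carrier_vec r" and t1c: "t1 \<in> carrier_vec (k - r)" using p1 p1e by auto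
    have e2c: "e2 \<in> carrier_vec r" and t2c: "t2 \<in> carrier_vec (k - r)" using p2 p2e by auto
    have c1: "PiP *\<^sub>v (xe e1 + Pt *\<^sub>v t1) \<in> carrier_vec k" by (rule mult_mat_vec_carrier[OF PiPc xac[OF t1c]])
    have c2: "PiP *\<^sub>v (xe e2 + Pt *\<^sub>v t2) \<in> carrier_vec k" by (rule mult_mat_vec_carrier[OF PiPc xac[OF t2c]])
    from eq have "(PiP *\<^sub>v (xe e1 + Pt *\<^sub>v t1)) @\<^sub>v (y + e e1) = (PiP *\<^sub>v (xe e2 + Pt *\<^sub>v t2)) @\<^sub>v (y + e e2)"
      unfolding p1e p2e Phi_eq .
    then have eqa: "PiP *\<^sub>v (xe e1 + Pt *\<^sub>v t1) = PiP *\<^sub>v (xe e2 + Pt *\<^sub>v t2)" and eqe0: "y + e e1 = y + e e2"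
      using append_vec_eq[OF c1 c2] by auto
    have eqe: "e e1 = e e2" by (rule vec_add_left_cancel[OF ec ec yc eqe0])
    have w1c: "Qt *\<^sub>v e1 + e0 \<in> carrier_vec m" by (rule add_carrier_vec[OF mult_mat_vec_carrier[OF Qtc e1c] e0c])
    have w2c: "Qt *\<^sub>v e2 + e0 \<in> carrier_vec m" by (rule add_carrier_vec[OF mult_mat_vec_carrier[OF Qtc e2c] e0c])
    have "Qt *\<^sub>v e1 + e0 = Qt *\<^sub>v e2 + e0"
      using PiQcanc[OF w1c] PiQcanc[OF w2c] eqe unfolding e_eq by metis
    then have qq: "Qt *\<^sub>v e1 = Qt *\<^sub>v e2"
      by (rule vec_add_right_cancel[OF mult_mat_vec_carrier[OF Qtc e1c] mult_mat_vec_carrier[OF Qtc e2c] e0c])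
    have e12: "e1 = e2"
    proof (cases "r < m")
      case True
      have Qrc: "Qr \<in> carrier_mat (m - r) r" using QC[OF True] by auto
      show ?thesis using qq unfolding Qta[OF True e1c] Qta[OF True e2c]
        using append_vec_eq[OF mult_mat_vec_carrier[OF Qrc e1c] mult_mat_vec_carrier[OF Qrc e2c]] by auto
    next
      case False
      then have "r = m" using rm by simp
      then show ?thesis using qq Qt_ge[OF False] e1c e2c by simp
    qed
    have "xe e1 + Pt *\<^sub>v t1 = xe e1 + Pt *\<^sub>v t2"
      using PiPcanc[OF xac[OF t1c]] PiPcanc[OF xac[OF t2c]] eqa unfolding e12 by metis
    then have "(vec_first (z e1) r + R *\<^sub>v t1) @\<^sub>v t1 = (vec_first (z e1) r + R *\<^sub>v t2) @\<^sub>v t2"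
      using fwd[OF e1c t1c] fwd[OF e1c t2c] by simp
    then have "t1 = t2" using append_vec_eq[OF add_carrier_vec[OF vec_first_carrier mult_mat_vec_carrier[OF Rc t1c]]
        add_carrier_vec[OF vec_first_carrier mult_mat_vec_carrier[OF Rc t2c]]] by auto
    then show "p1 = p2" using p1e p2e e12 by simp
  qed
  have img1: "Phi ` (carrier_vec r \<times> carrier_vec (k - r)) \<subseteq> sys_code k Ptil"
  proof
    fix c assume "c \<in> Phi ` (carrier_vec r \<times> carrier_vec (k - r))"
    then obtain epri t where ep: "epri \<in> carrier_vec r" and tc: "t \<in> carrier_vec (k - r)" and c: "c = Phi (epri, t)"
      by auto
    let ?x = "PiP *\<^sub>v (xe epri + Pt *\<^sub>v t)"
    have "c = ?x @\<^sub>v (?x \<^sub>v* Ptil)" by (simp only: c Phi_eq vm_def conjunct2[OF fwd[OF ep tc]])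
    moreover have "?x \<in> carrier_vec k" by (rule mult_mat_vec_carrier[OF PiPc xac[OF tc]])
    ultimately show "c \<in> sys_code k Ptil" unfolding sys_code_def by blast
  qed
  have QP0: "Q * transpose_mat Ptil = 0\<^sub>m (m - r) k"
  proof -
    have QPP: "Q * (transpose_mat Ptil * PiP) = 0\<^sub>m (m - r) k"
    proof (rule eq_matI)
      fix i j assume i: "i < dim_row (0\<^sub>m (m - r) k :: bit mat)" and j: "j < dim_col (0\<^sub>m (m - r) k :: bit mat)"
      then have i': "i < m - r" and j': "j < k" by auto
      have "(Q * (transpose_mat Ptil * PiP)) $$ (i, j) = (EP * (transpose_mat Ptil * PiP)) $$ (r + i, j)"
        by (rule QM[OF PPc i' j'])
      also have "EP * (transpose_mat Ptil * PiP) = B"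
        using EPB assoc_mult_mat[OF EPc Pc PiPc] by simp
      also have "B $$ (r + i, j) = 0" unfolding B_def using i' j' rk by simp
      finally show "(Q * (transpose_mat Ptil * PiP)) $$ (i, j) = 0\<^sub>m (m - r) k $$ (i, j)" using i' j' by simp
    qed (use carrier_matD[OF Qc] carrier_matD[OF PPc] in auto)
    have "Q * transpose_mat Ptil = Q * transpose_mat Ptil * (PiP * transpose_mat PiP)"
      unfolding PiP1 using right_mult_one_mat[OF mult_carrier_mat[OF Qc Pc]] by simp
    also have "\<dots> = Q * (transpose_mat Ptil * PiP) * transpose_mat PiP"
      using assoc_mult_mat[OF mult_carrier_mat[OF Qc Pc] PiPc transpose_carrier_mat[THEN iffD2, OF PiPc]]
        assoc_mult_mat[OF Qc Pc PiPc] by simp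
    also have "\<dots> = 0\<^sub>m (m - r) k" unfolding QPP
      using left_mult_zero_mat[OF transpose_carrier_mat[THEN iffD2, OF PiPc]] by simp
    finally show ?thesis .
  qed
  have img2: "sys_code k Ptil \<subseteq> Phi ` (carrier_vec r \<times> carrier_vec (k - r))"
  proof
    fix c assume "c \<in> sys_code k Ptil"
    then obtain x where xc: "x \<in> carrier_vec k" and c: "c = x @\<^sub>v (x \<^sub>v* Ptil)"
      unfolding sys_code_def by blast
    define s where "s = transpose_mat Ptil *\<^sub>v x"
    have sc: "s \<in> carrier_vec m" unfolding s_def by (rule mult_mat_vec_carrier[OF Pc xc])
    have syc: "s + y \<in> carrier_vec m" by (rule add_carrier_vec[OF sc yc])
    define w where "w = transpose_mat PiQ *\<^sub>v (s + y)"
    have wc: "w \<in> carrier_vec m" unfolding w_def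
      by (rule mult_mat_vec_carrier[OF transpose_carrier_mat[THEN iffD2, OF PiQc] syc])
    define epri where "epri = vec_last w r"
    have ep: "epri \<in> carrier_vec r" unfolding epri_def by simp
    define wP where "wP = transpose_mat PiP *\<^sub>v x"
    have wPc: "wP \<in> carrier_vec k" unfolding wP_def
      by (rule mult_mat_vec_carrier[OF transpose_carrier_mat[THEN iffD2, OF PiPc] xc])
    define t where "t = vec_last wP (k - r)"
    have tc: "t \<in> carrier_vec (k - r)" unfolding t_def by simp
    have Qs: "Q *\<^sub>v s = 0\<^sub>v (m - r)"
    proof -
      have "Q *\<^sub>v s = (Q * transpose_mat Ptil) *\<^sub>v x" unfolding s_def
        by (rule assoc_mult_mat_vec[symmetric, OF Qc Pc xc])
      also have "\<dots> = 0\<^sub>v (m - r)" unfolding QP0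
        by (rule eq_vecI) (use xc in \<open>auto simp: scalar_prod_def\<close>)
      finally show ?thesis .
    qed
    have wform: "Qt *\<^sub>v epri + e0 = w"
    proof (cases "r < m")
      case True
      have EQc: "EQ \<in> carrier_mat (m - r) (m - r)" and Qrc: "Qr \<in> carrier_mat (m - r) r" using QC[OF True] by auto
      define w1 where "w1 = vec_first w (m - r)"
      have w1c: "w1 \<in> carrier_vec (m - r)" unfolding w1_def by simp
      have wsplit: "w = w1 @\<^sub>v epri" unfolding w1_def epri_def
        by (rule vec_first_last_append[symmetric]) (use wc dimr in \<open>simp add: add.commute\<close>)
      have "Q *\<^sub>v (PiQ *\<^sub>v w) = Q *\<^sub>v (s + y)" unfolding w_def using PiQcanc2[OF syc] by simp
      also have "\<dots> = Q *\<^sub>v s + Q *\<^sub>v y" by (rule mult_add_distrib_mat_vec[OF Qc sc yc])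
      also have "\<dots> = Q *\<^sub>v y" unfolding Qs by (rule left_zero_vec[OF Qyc])
      finally have h: "Q *\<^sub>v (PiQ *\<^sub>v w) = Q *\<^sub>v y" .
      have EQQy: "EQ *\<^sub>v (Q *\<^sub>v y) = w1 + Qr *\<^sub>v epri"
        using QPi[OF True w1c ep] h unfolding wsplit[symmetric] by simp
      have Qrep: "Qr *\<^sub>v epri \<in> carrier_vec (m - r)" by (rule mult_mat_vec_carrier[OF Qrc ep])
      have EQQyc: "EQ *\<^sub>v (Q *\<^sub>v y) \<in> carrier_vec (m - r)" by (rule mult_mat_vec_carrier[OF EQc Qyc])
      have "Qt *\<^sub>v epri + e0 = ((Qr *\<^sub>v epri) @\<^sub>v epri) + ((EQ *\<^sub>v (Q *\<^sub>v y)) @\<^sub>v 0\<^sub>v r)"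
        unfolding Qta[OF True ep] e0_lt[OF True] by (rule refl)
      also have "\<dots> = (Qr *\<^sub>v epri + EQ *\<^sub>v (Q *\<^sub>v y)) @\<^sub>v (epri + 0\<^sub>v r)"
        by (rule append_vec_add[OF Qrep EQQyc ep zero_carrier_vec])
      also have "epri + 0\<^sub>v r = epri" by (rule right_zero_vec[OF ep])
      also have "Qr *\<^sub>v epri + EQ *\<^sub>v (Q *\<^sub>v y) = w1"
      proof -
        have "Qr *\<^sub>v epri + EQ *\<^sub>v (Q *\<^sub>v y) = Qr *\<^sub>v epri + (Qr *\<^sub>v epri + w1)"
          unfolding EQQy using comm_add_vec[OF w1c Qrep] by simp
        also have "\<dots> = w1" by (rule bv_L2[OF Qrep w1c])
        finally show ?thesis .
      qed
      finally show ?thesis using wsplit by simp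
    next
      case False
      then have rmm: "r = m" using rm by simp
      have "epri = w" unfolding epri_def rmm by (rule vec_last_full[OF wc])
      then show ?thesis using Qt_ge[OF False] e0_ge[OF False] wc rmm by simp
    qed
    have ee: "e epri = s + y" unfolding e_eq wform w_def by (rule PiQcanc2[OF syc])
    have second: "y + e epri = s" unfolding ee using comm_add_vec[OF sc yc] bv_L2[OF yc sc] by simp
    define wf where "wf = vec_first wP r"
    have wfc: "wf \<in> carrier_vec r" unfolding wf_def by simp
    have wPs: "wP = wf @\<^sub>v t" unfolding wf_def t_def
      by (rule vec_first_last_append[symmetric]) (use wPc dimc in simp)
    have Rtc: "R *\<^sub>v t \<in> carrier_vec r" by (rule mult_mat_vec_carrier[OF Rc tc])
    have zE: "z epri = EP *\<^sub>v s" unfolding z_eq ee using bv_L3[OF yc sc] by simp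
    also have "\<dots> = (EP * transpose_mat Ptil * PiP) *\<^sub>v wP"
    proof -
      have "x = PiP *\<^sub>v wP" unfolding wP_def by (rule PiPcanc2[OF xc, symmetric])
      then have "EP *\<^sub>v s = EP *\<^sub>v (transpose_mat Ptil *\<^sub>v (PiP *\<^sub>v wP))" unfolding s_def by simp
      also have "\<dots> = (EP * transpose_mat Ptil * PiP) *\<^sub>v wP"
        using assoc_mult_mat_vec[OF mult_carrier_mat[OF EPc Pc] PiPc wPc]
          assoc_mult_mat_vec[OF EPc Pc mult_mat_vec_carrier[OF PiPc wPc]] by simp
      finally show ?thesis .
    qed
    also have "\<dots> = (wf + R *\<^sub>v t) @\<^sub>v 0\<^sub>v (m - r)" unfolding EPB wPs by (rule Bv[OF wfc tc])
    finally have zf: "vec_first (z epri) r = wf + R *\<^sub>v t"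
      using vec_first_append[OF add_carrier_vec[OF wfc Rtc]] by simp
    have "xe epri + Pt *\<^sub>v t = ((wf + R *\<^sub>v t) + R *\<^sub>v t) @\<^sub>v t" using fwd[OF ep tc] zf by simp
    also have "(wf + R *\<^sub>v t) + R *\<^sub>v t = wf" by (rule bv_L3[OF Rtc wfc])
    finally have "xe epri + Pt *\<^sub>v t = wP" using wPs by simp
    then have first: "PiP *\<^sub>v (xe epri + Pt *\<^sub>v t) = x" unfolding wP_def using PiPcanc2[OF xc] by simp
    have "Phi (epri, t) = c" unfolding Phi_eq first second c vm_def s_def by (rule refl)
    then show "c \<in> Phi ` (carrier_vec r \<times> carrier_vec (k - r))" using ep tc by force
  qed
  have bij: "bij_betw Phi (carrier_vec r \<times> carrier_vec (k - r)) (sys_code k Ptil)"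
    unfolding bij_betw_def using inj img1 img2 by blast
  have "card (sys_code k Ptil) = card (carrier_vec r \<times> carrier_vec (k - r) :: (bit vec \<times> bit vec) set)"
    using bij_betw_same_card[OF bij] by simp
  also have "\<dots> = 2 ^ r * 2 ^ (k - r)" by (simp add: card_cartesian_product card_bit_vec)
  also have "\<dots> = 2 ^ k" using dimc by (metis power_add)
  finally show ?thesis using bij by simp
qed

end
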